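(* Let $\mathcal{G}=(V,L)$ be a finite connected undirected graph with monitor set $M\subseteq V$ and non-monitor set $N=V\setminus M$, $\sigma=|N|$, and let the measurement paths $P$ be given by Controllable Simple-path Probing (CSP). Let $S\subseteq N$ be nonempty. Then: (a) if $k\le\sigma-2$, $\Gamma_{\mathcal{G}^*}(S,m')\ge k+2$ and $\min_{m\in M}\Gamma_{\mathcal{G}_m}(S,m')\ge k+1$, then $S$ is $k$-identifiable; (b) if $k\le\sigma-1$ and $S$ is $k$-identifiable, then $\Gamma_{\mathcal{G}^*}(S,m')\ge k+1$ and $\min_{m\in M}\Gamma_{\mathcal{G}_m}(S,m')\ge k$.
   Context: Here $k\ge1$ is an integer. Failure model: a failure set is any $F\subseteq N$ (monitors never fail). A measurement path fails iff it traverses at least one node of $F$. $P_F$ denotes the set of paths in $P$ traversing at least one node of $F$. Two failure sets $F_1,F_2$ are distinguishable iff $P_{F_1}\neq P_{F_2}$. A set $S\subseteq N$ is $k$-identifiable if any two failure sets $F_1,F_2\subseteq N$ with $|F_1|,|F_2|\le k$ and $F_1\cap S\neq F_2\cap S$ are distinguishable. Under CSP, $P$ consists of all simple paths (no repeated nodes) in $\mathcal{G}$ between two distinct monitors. For $M'\subseteq M$, $\mathcal{N}(M')$ denotes the set of non-monitors adjacent to at least one monitor in $M'$. The auxiliary graph $\mathcal{G}^*$ is obtained from $\mathcal{G}$ by deleting all monitors, adding a virtual node $m'$, and linking $m'$ to every node of $\mathcal{N}(M)$. For $m\in M$, the auxiliary graph $\mathcal{G}_m$ is obtained from $\mathcal{G}$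 by deleting all monitors, adding a virtual node $m'$, and linking $m'$ to every node of $\mathcal{N}(M\setminus\{m\})$. For nodes $s,t$ of a graph $\mathcal{H}$, $C_{\mathcal{H}}(s,t)$ is a minimum-cardinality set of nodes (other than $s,t$) whose deletion destroys all $s$–$t$ paths; if $s,t$ are adjacent, $C_{\mathcal{H}}(s,t):=V(\mathcal{H})\setminus\{t\}$. $\Gamma_{\mathcal{H}}(S,m):=\min_{w\in S}|C_{\mathcal{H}}(w,m)|$. *)

theory Defs
  imports Main
begin

definition sgraph :: "'a set \<Rightarrow> ('a \<Rightarrow> 'a \<Rightarrow> bool) \<Rightarrow> bool" where
  "sgraph V E \<longleftrightarrow> finite V \<and>
     (\<forall>u v. E u v \<longrightarrow> u \<in> V \<and> v \<in> V \<and> u \<noteq> v \<and> E v u)"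

definition is_path :: "'a set \<Rightarrow> ('a \<Rightarrow> 'a \<Rightarrow> bool) \<Rightarrow> 'a list \<Rightarrow> bool" where
  "is_path V E xs \<longleftrightarrow> xs \<noteq> [] \<and> distinct xs \<and> set xs \<subseteq> V \<and>
     (\<forall>i. Suc i < length xs \<longrightarrow> E (xs ! i) (xs ! Suc i))"

definition connected_graph :: "'a set \<Rightarrow> ('a \<Rightarrow> 'a \<Rightarrow> bool) \<Rightarrow> bool" where
  "connected_graph V E \<longleftrightarrow>
     (\<forall>u\<in>V. \<forall>v\<in>V. \<exists>xs. is_path V E xs \<and> hd xs = u \<and> last xs = v)"

definition CSP_paths :: "'a set \<Rightarrow> ('a \<Rightarrow> 'a \<Rightarrow> bool) \<Rightarrow> 'a set \<Rightarrow> 'a list set" where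
  "CSP_paths V E M = {xs. is_path V E xs \<and> hd xs \<in> M \<and> last xs \<in> M \<and> hd xs \<noteq> last xs}"

definition fail_paths :: "'a list set \<Rightarrow> 'a set \<Rightarrow> 'a list set" where
  "fail_paths P F = {p \<in> P. set p \<inter> F \<noteq> {}}"

definition k_identifiable ::
  "'a set \<Rightarrow> ('a \<Rightarrow> 'a \<Rightarrow> bool) \<Rightarrow> 'a set \<Rightarrow> nat \<Rightarrow> 'a set \<Rightarrow> bool" where
  "k_identifiable V E M k S \<longleftrightarrow>
     (\<forall>F1 F2. F1 \<subseteq> V - M \<and> F2 \<subseteq> V - M \<and> card F1 \<le> k \<and> card F2 \<le> k \<and>
        F1 \<inter> S \<noteq> F2 \<inter> S \<longrightarrow>
        fail_paths (CSP_paths V E M) F1 \<noteq> fail_paths (CSP_paths V E M) F2)"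

definition mon_nbrs :: "'a set \<Rightarrow> ('a \<Rightarrow> 'a \<Rightarrow> bool) \<Rightarrow> 'a set \<Rightarrow> 'a set \<Rightarrow> 'a set" where
  "mon_nbrs V E M M' = {v \<in> V - M. \<exists>m\<in>M'. E m v}"

text \<open>Auxiliary graph: delete all monitors, add a virtual node m' (represented by None),
  link m' to every node of A. Original nodes v are represented as Some v.\<close>
definition aux_V :: "'a set \<Rightarrow> 'a set \<Rightarrow> 'a option set" where
  "aux_V V M = Some ` (V - M) \<union> {None}"

definition aux_E :: "'a set \<Rightarrow> ('a \<Rightarrow> 'a \<Rightarrow> bool) \<Rightarrow> 'a set \<Rightarrow> 'a set \<Rightarrow>
    'a option \<Rightarrow> 'a option \<Rightarrow> bool" where
  "aux_E V E M A x y = (case (x, y) of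
       (Some u, Some v) \<Rightarrow> u \<in> V - M \<and> v \<in> V - M \<and> E u v
     | (None, Some v) \<Rightarrow> v \<in> A
     | (Some u, None) \<Rightarrow> u \<in> A
     | (None, None) \<Rightarrow> False)"

definition cut_size :: "'b set \<Rightarrow> ('b \<Rightarrow> 'b \<Rightarrow> bool) \<Rightarrow> 'b \<Rightarrow> 'b \<Rightarrow> nat" where
  "cut_size HV HE s t =
     (if HE s t then card (HV - {t})
      else (LEAST n. \<exists>C. C \<subseteq> HV - {s, t} \<and> card C = n \<and>
              \<not> (\<exists>xs. is_path (HV - C) HE xs \<and> hd xs = s \<and> last xs = t)))"

definition Gamma :: "'b set \<Rightarrow> ('b \<Rightarrow> 'b \<Rightarrow> bool) \<Rightarrow> 'b set \<Rightarrow> 'b \<Rightarrow> nat" where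
  "Gamma HV HE S t = Min ((\<lambda>w. cut_size HV HE w t) ` S)"

end

theory Submission
  imports Defs
begin


lemma chain_succ:
  "(\<forall>i. Suc i < length xs \<longrightarrow> E (xs ! i) (xs ! Suc i)) \<longleftrightarrow> successively E xs"
proof (induction xs rule: induct_list012)
  case (3 x y xs)
  have "(\<forall>i. Suc i < length (x # y # xs) \<longrightarrow> E ((x # y # xs) ! i) ((x # y # xs) ! Suc i))
     \<longleftrightarrow> E x y \<and> (\<forall>i. Suc i < length (y # xs) \<longrightarrow> E ((y # xs) ! i) ((y # xs) ! Suc i))"
    (is "?L \<longleftrightarrow> ?R")
  proof
    assume L: ?L
    show ?R
    proof
      show "E x y" using L[rule_format, of 0] by simp
      show "\<forall>i. Suc i < length (y # xs) \<longrightarrow> E ((y # xs) ! i) ((y # xs) ! Suc i)"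
        using L by (metis Suc_less_eq length_Cons nth_Cons_Suc)
    qed
  next
    assume R: ?R
    show ?L
    proof (intro allI impI)
      fix i assume "Suc i < length (x # y # xs)"
      then show "E ((x # y # xs) ! i) ((x # y # xs) ! Suc i)"
        using R by (cases i) auto
    qed
  qed
  then show ?case using 3 by simp
qed auto

lemma is_path_alt:
  "is_path V E xs \<longleftrightarrow> xs \<noteq> [] \<and> distinct xs \<and> set xs \<subseteq> V \<and> successively E xs"
  unfolding is_path_def chain_succ ..

lemma is_path_Cons:
  "is_path V E (x # xs) \<longleftrightarrow> x \<in> V \<and> x \<notin> set xs \<and> (xs = [] \<or> (E x (hd xs) \<and> is_path V E xs))"
  unfolding is_path_alt by (auto simp: successively_Cons)

lemma is_path_single[simp]: "is_path V E [x] \<longleftrightarrow> x \<in> V"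
  by (simp add: is_path_Cons)

lemma is_path_append:
  assumes "xs \<noteq> []" "ys \<noteq> []"
  shows "is_path V E (xs @ ys) \<longleftrightarrow> is_path V E xs \<and> is_path V E ys \<and> set xs \<inter> set ys = {}
     \<and> E (last xs) (hd ys)"
  using assms unfolding is_path_alt by (auto simp: successively_append_iff)

lemma is_path_mono: "is_path V E xs \<Longrightarrow> set xs \<subseteq> W \<Longrightarrow> is_path W E xs"
  unfolding is_path_alt by auto

lemma is_path_rev:
  assumes "\<And>a b. E a b \<Longrightarrow> E b a" "is_path V E xs"
  shows "is_path V E (rev xs)"
  using assms(2) unfolding is_path_alt
  by (auto intro: successively_mono assms(1))

lemma is_path_E_mono:
  assumes "is_path V E xs" "\<And>a b. a \<in> set xs \<Longrightarrow> b \<in> set xs \<Longrightarrow> E a b \<Longrightarrow> E' a b"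
  shows "is_path V E' xs"
  using assms unfolding is_path_alt by (auto intro: successively_mono)

lemma is_path_set: "is_path V E xs \<Longrightarrow> set xs \<subseteq> V"
  unfolding is_path_def by auto

lemma is_path_nonempty: "is_path V E xs \<Longrightarrow> xs \<noteq> []"
  unfolding is_path_def by auto

lemma is_path_distinct: "is_path V E xs \<Longrightarrow> distinct xs"
  unfolding is_path_def by auto



definition fan2 :: "'a set \<Rightarrow> ('a \<Rightarrow> 'a \<Rightarrow> bool) \<Rightarrow> 'a \<Rightarrow> 'a set \<Rightarrow> bool" where
  "fan2 V E s T \<longleftrightarrow> (\<exists>p q. is_path V E p \<and> is_path V E q \<and> hd p = s \<and> hd q = s \<and>
     last p \<in> T \<and> last q \<in> T \<and> last p \<noteq> last q \<and> set p \<inter> set q = {s})"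

lemma fan2I:
  assumes "is_path V E p" "is_path V E q" "hd p = s" "hd q = s" "last p \<in> T" "last q \<in> T"
    "last p \<noteq> last q" "set p \<inter> set q = {s}"
  shows "fan2 V E s T"
  using assms unfolding fan2_def by blast

lemma transfer1:
  assumes A1: "is_path V E A1" "hd A1 = u" and A2: "is_path V E A2" "hd A2 = u"
  and int: "set A1 \<inter> set A2 = {u}" and lasts: "last A1 \<in> T" "last A2 \<in> T" "last A1 \<noteq> last A2"
  and sA: "s \<notin> set A1" "s \<notin> set A2" and su: "E s u" and sV: "s \<in> V"
  and pre: "is_path V E pre" "hd pre = s" "set pre \<inter> (set A1 \<union> set A2) = {}"
  and q0: "q0 \<in> set A1" "q0 \<noteq> u" "E (last pre) q0"
  shows "fan2 V E s T"
proof -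
  obtain xs ys where A1s: "A1 = xs @ q0 # ys" using q0(1) by (meson split_list)
  have xsne: "xs \<noteq> []" using A1s A1(2) q0(2) by (cases xs) auto
  have "is_path V E (q0 # ys)" using A1(1) A1s xsne is_path_append by fastforce
  have uxs: "u \<in> set xs" using A1s A1(2) xsne by (cases xs) auto
  have dA1: "distinct A1" using A1(1) is_path_distinct by blast
  have uys: "u \<notin> set (q0 # ys)" using dA1 A1s uxs by auto
  have ysA1: "set (q0 # ys) \<subseteq> set A1" using A1s by auto
  have pne: "pre \<noteq> []" using pre(1) is_path_nonempty by blast
  have s_pre: "s \<in> set pre" using pne pre(2) by (cases pre) auto
  have X: "is_path V E (pre @ q0 # ys)"
    using pre ysA1 \<open>is_path V E (q0 # ys)\<close> q0(3) pne by (subst is_path_append) auto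
  have Y: "is_path V E (s # A2)"
    using A2 sA sV su is_path_nonempty[OF A2(1)] by (auto simp: is_path_Cons)
  have lastX: "last (pre @ q0 # ys) = last A1" using A1s by simp
  have "set (pre @ q0 # ys) \<inter> set (s # A2) = {s}"
  proof -
    have "set (q0 # ys) \<inter> set A2 \<subseteq> {u}" using int ysA1 by blast
    then have "set (q0 # ys) \<inter> set A2 = {}" using uys by blast
    moreover have "s \<notin> set (q0 # ys)" using ysA1 sA by blast
    ultimately show ?thesis using pre(3) s_pre by auto
  qed
  moreover have "hd (pre @ q0 # ys) = s" using pne pre(2) by simp
  ultimately show ?thesis
    using X Y lastX lasts is_path_nonempty[OF A2(1)]
    by (intro fan2I[of V E "pre @ q0 # ys" "s # A2"]) auto
qed


lemma fan2_transfer: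
  assumes A1: "is_path V E A1" "hd A1 = u" and A2: "is_path V E A2" "hd A2 = u"
  and int: "set A1 \<inter> set A2 = {u}" and lasts: "last A1 \<in> T" "last A2 \<in> T" "last A1 \<noteq> last A2"
  and sA: "s \<notin> set A1" "s \<notin> set A2" and su: "E s u" and sV: "s \<in> V"
  and Q: "is_path (V - {u}) E Q" "hd Q = s" "last Q \<in> T" and sT: "s \<notin> T"
  shows "fan2 V E s T"
proof -
  have Qne: "Q \<noteq> []" using Q(1) is_path_nonempty by blast
  have "\<exists>x\<in>set Q. x \<in> set A1 \<union> set A2 \<union> T" using Qne Q(3) last_in_set by blast
  then obtain pre q0 post where Qs: "Q = pre @ q0 # post" and q0: "q0 \<in> set A1 \<union> set A2 \<union> T"
    and preav: "\<forall>y\<in>set pre. y \<notin> set A1 \<union> set A2 \<union> T"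
    by (rule split_list_first_propE)
  have pne: "pre \<noteq> []"
  proof
    assume "pre = []"
    then have "q0 = s" using Qs Q(2) by simp
    then show False using q0 sA sT by blast
  qed
  have QV: "is_path V E Q" using Q(1) is_path_mono is_path_set by blast
  have pp: "is_path V E (pre @ q0 # post)" using QV Qs by simp
  have pre1: "is_path V E pre" and e: "E (last pre) q0" and q0pre: "q0 \<notin> set pre"
    using pp pne unfolding is_path_append[OF pne list.simps(3)] by auto
  have pre2: "hd pre = s" using Qs Q(2) pne by simp
  have pre3: "set pre \<inter> (set A1 \<union> set A2) = {}" using preav by blast
  have "q0 \<in> set Q" using Qs by simp
  then have q0u: "q0 \<noteq> u" using Q(1) is_path_set by blast
  show ?thesis
  proof (cases "q0 \<in> set A1")
    case True
    show ?thesis using transfer1[OF A1 A2 int lasts sA su sV pre1 pre2 pre3 True q0u e] .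
  next
    case F1: False
    show ?thesis
    proof (cases "q0 \<in> set A2")
      case True
      have i2: "set A2 \<inter> set A1 = {u}" using int by blast
      have l2: "last A2 \<noteq> last A1" using lasts(3) by metis
      have p3: "set pre \<inter> (set A2 \<union> set A1) = {}" using pre3 by blast
      show ?thesis
        using transfer1[OF A2 A1 i2 lasts(2,1) l2 sA(2,1) su sV pre1 pre2 p3 True q0u e] .
    next
      case F2: False
      have qT: "q0 \<in> T" using q0 F1 F2 by blast
      have qV: "q0 \<in> V" using pp is_path_set by fastforce
      have X: "is_path V E (pre @ [q0])"
        unfolding is_path_append[OF pne list.simps(3)] using pre1 e q0pre qV by simp
      have Y: "is_path V E (s # A1)"
        using A1 sA sV su is_path_nonempty[OF A1(1)] by (simp add: is_path_Cons)
      have s_pre: "s \<in> set pre" using pne pre2 hd_in_set by blast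
      have "last A1 \<in> set A1" using is_path_nonempty[OF A1(1)] by simp
      then have "q0 \<noteq> last A1" using F1 by blast
      moreover have "set (pre @ [q0]) \<inter> set (s # A1) = {s}" using pre3 F1 s_pre by auto
      moreover have "last (s # A1) = last A1" using is_path_nonempty[OF A1(1)] by simp
      moreover have "hd (pre @ [q0]) = s" using pne pre2 by simp
      ultimately show ?thesis using X Y qT lasts
        by (intro fan2I[of V E "pre @ [q0]" "s # A1"]) auto
    qed
  qed
qed


definition merge :: "('a \<Rightarrow> 'a \<Rightarrow> bool) \<Rightarrow> 'a \<Rightarrow> 'a \<Rightarrow> 'a \<Rightarrow> 'a \<Rightarrow> bool" where
  "merge E s u a b \<longleftrightarrow> (E a b \<and> a \<noteq> u \<and> b \<noteq> u) \<or> (a = s \<and> E u b \<and> b \<noteq> s \<and> b \<noteq> u)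
     \<or> (b = s \<and> E u a \<and> a \<noteq> s \<and> a \<noteq> u)"

lemma merge_sym: "(\<And>a b. E a b \<Longrightarrow> E b a) \<Longrightarrow> merge E s u a b \<Longrightarrow> merge E s u b a"
  unfolding merge_def by blast

lemma reroute:
  assumes p: "is_path W E p" "hd p = s" "last p \<noteq> u" and su: "s \<noteq> u"
  shows "\<exists>p'. is_path (W - {u}) (merge E s u) p' \<and> hd p' = s \<and> last p' = last p"
proof (cases "u \<in> set p")
  case False
  have "is_path W (merge E s u) p"
    using p(1) by (rule is_path_E_mono) (use False in \<open>auto simp: merge_def\<close>)
  moreover have "set p \<subseteq> W - {u}" using False is_path_set[OF p(1)] by blast
  ultimately have "is_path (W - {u}) (merge E s u) p" by (rule is_path_mono)
  then show ?thesis using p(2) by (intro exI[where x=p]) simp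
next
  case True
  then obtain xs ys where ps: "p = xs @ u # ys" by (meson split_list)
  have xne: "xs \<noteq> []" using ps p(2) su by (cases xs) auto
  have yne: "ys \<noteq> []" using ps p(3) by auto
  have sxs: "s \<in> set xs" using ps p(2) xne by (cases xs) auto
  have pp: "is_path W E (xs @ u # ys)" using p(1) ps by simp
  have uy: "is_path W E (u # ys)" and dis: "set xs \<inter> set (u # ys) = {}"
    using pp unfolding is_path_append[OF xne list.simps(3)] by auto
  have ys1: "is_path W E ys" "E u (hd ys)" "u \<notin> set ys" using uy yne by (auto simp: is_path_Cons)
  have sys: "s \<notin> set ys" using dis sxs by auto
  have hy: "hd ys \<noteq> s" "hd ys \<noteq> u" using sys ys1(3) hd_in_set[OF yne] by auto
  have ysm: "is_path W (merge E s u) ys"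
    using ys1(1) by (rule is_path_E_mono) (use ys1(3) in \<open>auto simp: merge_def\<close>)
  have ysm2: "is_path (W - {u}) (merge E s u) ys"
    using ysm ys1(3) is_path_set[OF ysm] by (intro is_path_mono[OF ysm]) blast
  have sW: "s \<in> W" using is_path_set[OF pp] sxs by auto
  have "is_path (W - {u}) (merge E s u) (s # ys)"
    using ysm2 sys sW su ys1(2) hy yne by (auto simp: is_path_Cons merge_def)
  moreover have "last (s # ys) = last p" using ps yne by simp
  ultimately show ?thesis by auto
qed

lemma lift:
  assumes "is_path (V - {u}) (merge E s u) (s # R)" "R \<noteq> []"
  shows "is_path V E R \<and> u \<notin> set R \<and> s \<notin> set R \<and> (E s (hd R) \<or> E u (hd R))"
proof -
  have a: "s \<notin> set R" "is_path (V - {u}) (merge E s u) R" "merge E s u s (hd R)"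
    using assms by (auto simp: is_path_Cons)
  have b: "is_path (V - {u}) E R"
    using a(2) by (rule is_path_E_mono) (use a(1) in \<open>auto simp: merge_def\<close>)
  have "u \<notin> set R" using is_path_set[OF a(2)] by blast
  moreover have "is_path V E R" using b is_path_mono is_path_set by blast
  moreover have "E s (hd R) \<or> E u (hd R)" using a(3) by (auto simp: merge_def)
  ultimately show ?thesis using a(1) by blast
qed

lemma lift_case:
  assumes R1: "is_path V E R1" "u \<notin> set R1" "s \<notin> set R1" "E s (hd R1)" "R1 \<noteq> []"
    and R2: "is_path V E R2" "u \<notin> set R2" "s \<notin> set R2" "E s (hd R2) \<or> E u (hd R2)" "R2 \<noteq> []"
    and dis: "set R1 \<inter> set R2 = {}" and lasts: "last R1 \<in> T" "last R2 \<in> T" "last R1 \<noteq> last R2"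
    and sV: "s \<in> V" "u \<in> V" "E s u" "s \<noteq> u"
  shows "fan2 V E s T"
proof -
  have P: "is_path V E (s # R1)" using R1 sV by (simp add: is_path_Cons)
  show ?thesis
  proof (cases "E s (hd R2)")
    case True
    have "is_path V E (s # R2)" using R2 sV True by (simp add: is_path_Cons)
    then show ?thesis using P dis lasts R1 R2
      by (intro fan2I[of V E "s # R1" "s # R2"]) auto
  next
    case False
    then have "E u (hd R2)" using R2(4) by blast
    then have "is_path V E (u # R2)" using R2 sV by (simp add: is_path_Cons)
    then have "is_path V E (s # u # R2)" using R2 sV by (simp add: is_path_Cons)
    then show ?thesis using P dis lasts R1 R2
      by (intro fan2I[of V E "s # R1" "s # u # R2"]) auto
  qed
qed

lemma fan:
  assumes "finite V" "\<And>a b. E a b \<Longrightarrow> E b a" "s \<notin> T"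
    "\<exists>p. is_path V E p \<and> hd p = s \<and> last p \<in> T"
    "\<And>x. x \<in> V \<Longrightarrow> x \<noteq> s \<Longrightarrow> \<exists>p. is_path (V - {x}) E p \<and> hd p = s \<and> last p \<in> T - {x}"
  shows "fan2 V E s T"
  using assms
proof (induction "card V" arbitrary: V E rule: less_induct)
  case less
  obtain p0 where p0: "is_path V E p0" "hd p0 = s" "last p0 \<in> T" using less.prems(4) by blast
  obtain r where p0s: "p0 = s # r" using p0 is_path_nonempty by (cases p0) auto
  have rne: "r \<noteq> []" using p0s p0(3) less.prems(3) by auto
  define u where "u = hd r"
  have sV: "s \<in> V" and uV: "u \<in> V" and su: "E s u" and sr: "s \<notin> set r"
    using p0(1) p0s rne hd_in_set[OF rne] is_path_set[OF p0(1)] by (auto simp: is_path_Cons u_def)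
  have sneu: "s \<noteq> u" using sr rne hd_in_set u_def by metis
  show ?case
  proof (cases "\<exists>t\<in>V \<inter> T. E s t")
    case True
    then obtain t where t: "t \<in> V" "t \<in> T" "E s t" by blast
    have st: "s \<noteq> t" using t less.prems(3) by blast
    obtain Q where Q: "is_path (V - {t}) E Q" "hd Q = s" "last Q \<in> T - {t}"
      using less.prems(5)[OF t(1)] st by metis
    have P: "is_path V E [s, t]" using sV t st by (simp add: is_path_Cons)
    have QV: "is_path V E Q" using Q(1) is_path_mono is_path_set by blast
    have "t \<notin> set Q" using is_path_set[OF Q(1)] by blast
    moreover have "s \<in> set Q" using Q(2) is_path_nonempty[OF Q(1)] hd_in_set by metis
    ultimately have "set [s, t] \<inter> set Q = {s}" by auto
    then show ?thesis using P QV Q t by (intro fan2I[of V E "[s,t]" Q]) auto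
  next
    case False
    have uT: "u \<notin> T" using False uV su by blast
    define V' where "V' = V - {u}"
    define E' where "E' = merge E s u"
    have cV: "card V' < card V" unfolding V'_def by (rule card_Diff1_less[OF less.prems(1) uV])
    have f': "finite V'" using less.prems(1) V'_def by blast
    have sym': "\<And>a b. E' a b \<Longrightarrow> E' b a" unfolding E'_def using merge_sym less.prems(2) by metis
    have h0': "\<exists>p. is_path V' E' p \<and> hd p = s \<and> last p \<in> T"
      using reroute[OF p0(1,2) _ sneu] p0(3) uT unfolding V'_def E'_def by metis
    have h1': "\<exists>p. is_path (V' - {x}) E' p \<and> hd p = s \<and> last p \<in> T - {x}"
      if x: "x \<in> V'" "x \<noteq> s" for x
    proof -
      obtain p where p: "is_path (V - {x}) E p" "hd p = s" "last p \<in> T - {x}"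
        using less.prems(5)[of x] x unfolding V'_def by blast
      have "last p \<noteq> u" using p(3) uT by blast
      from reroute[OF p(1,2) this sneu] obtain p' where
        "is_path (V - {x} - {u}) (merge E s u) p'" "hd p' = s" "last p' = last p" by blast
      moreover have "V - {x} - {u} = V' - {x}" unfolding V'_def by blast
      ultimately show ?thesis using p(3) unfolding E'_def by metis
    qed
    have "fan2 V' E' s T"
      using less.hyps[OF cV f' sym' less.prems(3) h0' h1'] by blast
    then obtain P Q where PQ: "is_path V' E' P" "is_path V' E' Q" "hd P = s" "hd Q = s"
      "last P \<in> T" "last Q \<in> T" "last P \<noteq> last Q" "set P \<inter> set Q = {s}"
      unfolding fan2_def by blast
    obtain R1 where P1: "P = s # R1" using PQ(1,3) is_path_nonempty by (cases P) auto
    obtain R2 where Q1: "Q = s # R2" using PQ(2,4) is_path_nonempty by (cases Q) auto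
    have R1ne: "R1 \<noteq> []" using P1 PQ(5) less.prems(3) by auto
    have R2ne: "R2 \<noteq> []" using Q1 PQ(6) less.prems(3) by auto
    have L1: "is_path V E R1 \<and> u \<notin> set R1 \<and> s \<notin> set R1 \<and> (E s (hd R1) \<or> E u (hd R1))"
      using lift[of V u E s R1] PQ(1) P1 R1ne unfolding V'_def E'_def by blast
    have L2: "is_path V E R2 \<and> u \<notin> set R2 \<and> s \<notin> set R2 \<and> (E s (hd R2) \<or> E u (hd R2))"
      using lift[of V u E s R2] PQ(2) Q1 R2ne unfolding V'_def E'_def by blast
    have dis: "set R1 \<inter> set R2 = {}" using PQ(8) P1 Q1 L1 L2 by auto
    have lasts: "last R1 \<in> T" "last R2 \<in> T" "last R1 \<noteq> last R2"
      using PQ(5,6,7) P1 Q1 R1ne R2ne by auto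
    show ?thesis
    proof (cases "E s (hd R1)")
      case True
      show ?thesis
        using lift_case[of V E R1 u s R2 T] L1 L2 True R1ne R2ne dis lasts sV uV su sneu by blast
    next
      case F1: False
      show ?thesis
      proof (cases "E s (hd R2)")
        case True
        have dis2: "set R2 \<inter> set R1 = {}" using dis by blast
        have l2: "last R2 \<noteq> last R1" using lasts(3) by metis
        show ?thesis
          using lift_case[of V E R2 u s R1 T] L1 L2 True R1ne R2ne dis2 lasts(2,1) l2 sV uV su sneu
          by blast
      next
        case F2: False
        have A1: "is_path V E (u # R1)" "hd (u # R1) = u"
          using L1 F1 uV R1ne by (auto simp: is_path_Cons)
        have A2: "is_path V E (u # R2)" "hd (u # R2) = u"
          using L2 F2 uV R2ne by (auto simp: is_path_Cons)
        have int: "set (u # R1) \<inter> set (u # R2) = {u}" using dis by auto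
        have ls: "last (u # R1) \<in> T" "last (u # R2) \<in> T" "last (u # R1) \<noteq> last (u # R2)"
          using lasts R1ne R2ne by auto
        have sA: "s \<notin> set (u # R1)" "s \<notin> set (u # R2)" using L1 L2 sneu by auto
        obtain Q0 where Q0: "is_path (V - {u}) E Q0" "hd Q0 = s" "last Q0 \<in> T - {u}"
          using less.prems(5)[OF uV] sneu by metis
        have "last Q0 \<in> T" using Q0(3) by blast
        show ?thesis
          using fan2_transfer[OF A1 A2 int ls sA su sV Q0(1,2) \<open>last Q0 \<in> T\<close> less.prems(3)] .
      qed
    qed
  qed
qed



lemma to_G:
  assumes hp: "is_path (aux_V V M - Some ` C) (aux_E V E M A) hp" "hd hp = Some w" "last hp = None"
  shows "\<exists>p. is_path (V - M - C) E p \<and> hd p = w \<and> last p \<in> A"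
proof -
  have hne: "hp \<noteq> []" using hp(1) is_path_nonempty by blast
  define B where "B = butlast hp"
  have hpB: "hp = B @ [None]" using hne hp(3) unfolding B_def by (metis append_butlast_last_id)
  have Bne: "B \<noteq> []" using hpB hp(2) by auto
  have hpa: "distinct (B @ [None])" "set (B @ [None]) \<subseteq> aux_V V M - Some ` C"
      "successively (aux_E V E M A) (B @ [None])"
    using hp(1) hpB unfolding is_path_alt by auto
  have NB: "None \<notin> set B" using hpa(1) by simp
  have elts: "\<And>y. y \<in> set B \<Longrightarrow> \<exists>x. y = Some x \<and> x \<in> V - M - C"
  proof -
    fix y assume y: "y \<in> set B"
    obtain x where "y = Some x" using NB y by - (cases y, auto)
    moreover have "y \<in> aux_V V M - Some ` C" using hpa(2) y by auto
    ultimately show "\<exists>x. y = Some x \<and> x \<in> V - M - C" unfolding aux_V_def by auto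
  qed
  define p where "p = map the B"
  have Bp: "B = map Some p" unfolding p_def map_map
    by (rule sym, rule map_idI) (use elts in force)
  have pne: "p \<noteq> []" using Bne Bp by simp
  have dp: "distinct p" using hpa(1) Bp by (simp add: distinct_map)
  have sp: "set p \<subseteq> V - M - C" using elts Bp by auto
  have suc: "successively (aux_E V E M A) B" "aux_E V E M A (last B) None"
    using hpa(3) Bne by (auto simp: successively_append_iff)
  have "successively (\<lambda>x y. aux_E V E M A (Some x) (Some y)) p"
    using suc(1) Bp by (simp add: successively_map)
  then have "successively E p" by (rule successively_mono) (auto simp: aux_E_def)
  then have P: "is_path (V - M - C) E p" using pne dp sp unfolding is_path_alt by blast
  have "hd p = w" using hp(2) hpB Bp pne by (cases p) auto
  moreover have "last B = Some (last p)" using Bp pne by (simp add: last_map)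
  then have "last p \<in> A" using suc(2) by (simp add: aux_E_def)
  ultimately show ?thesis using P by blast
qed

lemma to_H:
  assumes p: "is_path (V - M - C) E p" "last p \<in> A"
  shows "is_path (aux_V V M - Some ` C) (aux_E V E M A) (map Some p @ [None])"
proof -
  have pa: "p \<noteq> []" "distinct p" "set p \<subseteq> V - M - C" "successively E p"
    using p(1) unfolding is_path_alt by auto
  have "successively (\<lambda>x y. aux_E V E M A (Some x) (Some y)) p"
    using pa(4) by (rule successively_mono) (use pa(3) in \<open>auto simp: aux_E_def\<close>)
  then have s1: "successively (aux_E V E M A) (map Some p)" by (simp add: successively_map)
  have "last (map Some p) = Some (last p)" using pa(1) by (simp add: last_map)
  then have s2: "aux_E V E M A (last (map Some p)) None" using p(2) by (simp add: aux_E_def)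
  have "successively (aux_E V E M A) (map Some p @ [None])"
    using s1 s2 by (simp add: successively_append_iff)
  moreover have "distinct (map Some p @ [None])" using pa(2) by (auto simp: distinct_map)
  moreover have "set (map Some p @ [None]) \<subseteq> aux_V V M - Some ` C"
    using pa(3) unfolding aux_V_def by auto
  ultimately show ?thesis unfolding is_path_alt by simp
qed

lemma to_H_hd: "p \<noteq> [] \<Longrightarrow> hd (map Some p @ [None]) = Some (hd p)"
  by (cases p) auto

lemma cut_adj:
  assumes "finite V" "w \<in> A"
  shows "cut_size (aux_V V M) (aux_E V E M A) (Some w) None = card (V - M)"
proof -
  have "aux_V V M - {None} = Some ` (V - M)" unfolding aux_V_def by auto
  moreover have "card (Some ` (V - M)) = card (V - M)" by (simp add: card_image)
  ultimately show ?thesis using assms(2) unfolding cut_size_def by (simp add: aux_E_def)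
qed

lemma cut_large:
  assumes w: "w \<in> V - M" and X: "X \<subseteq> V - M" "w \<notin> X"
    and c: "card X < cut_size (aux_V V M) (aux_E V E M A) (Some w) None"
  shows "\<exists>p. is_path (V - M - X) E p \<and> hd p = w \<and> last p \<in> A"
proof (cases "w \<in> A")
  case True
  have "is_path (V - M - X) E [w]" using w X by simp
  then show ?thesis using True by (intro exI[where x="[w]"]) simp
next
  case False
  show ?thesis
  proof (rule ccontr)
    assume np: "\<not> ?thesis"
    let ?HV = "aux_V V M" and ?HE = "aux_E V E M A"
    have nh: "\<not> (\<exists>xs. is_path (?HV - Some ` X) ?HE xs \<and> hd xs = Some w \<and> last xs = None)"
    proof
      assume "\<exists>xs. is_path (?HV - Some ` X) ?HE xs \<and> hd xs = Some w \<and> last xs = None"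
      then obtain xs where "is_path (?HV - Some ` X) ?HE xs" "hd xs = Some w" "last xs = None" by blast
      from to_G[OF this] np show False by blast
    qed
    have sub: "Some ` X \<subseteq> ?HV - {Some w, None}" using X unfolding aux_V_def by blast
    have cd: "card (Some ` X) = card X" by (simp add: card_image)
    have "\<not> ?HE (Some w) None" using False by (simp add: aux_E_def)
    then have "cut_size ?HV ?HE (Some w) None = (LEAST n. \<exists>C. C \<subseteq> ?HV - {Some w, None} \<and> card C = n \<and>
              \<not> (\<exists>xs. is_path (?HV - C) ?HE xs \<and> hd xs = Some w \<and> last xs = None))"
      unfolding cut_size_def by simp
    also have "\<dots> \<le> card X"
      by (rule Least_le) (intro exI[of _ "Some ` X"] conjI sub cd nh)
    finally show False using c by simp
  qed
qed

lemma cut_small: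
  assumes w: "w \<in> V - M" "w \<notin> A"
    and c: "cut_size (aux_V V M) (aux_E V E M A) (Some w) None \<le> r"
  shows "\<exists>C. C \<subseteq> V - M - {w} \<and> card C \<le> r \<and>
           \<not> (\<exists>p. is_path (V - M - C) E p \<and> hd p = w \<and> last p \<in> A)"
proof -
  let ?HV = "aux_V V M" and ?HE = "aux_E V E M A"
  define Q where "Q n \<longleftrightarrow> (\<exists>C. C \<subseteq> ?HV - {Some w, None} \<and> card C = n \<and>
              \<not> (\<exists>xs. is_path (?HV - C) ?HE xs \<and> hd xs = Some w \<and> last xs = None))" for n
  have nadj: "\<not> ?HE (Some w) None" using w(2) by (simp add: aux_E_def)
  have cs: "cut_size ?HV ?HE (Some w) None = (LEAST n. Q n)"
    unfolding cut_size_def Q_def using nadj by simp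
  have ex: "Q (card (?HV - {Some w, None}))"
    unfolding Q_def
  proof (intro exI conjI)
    show "?HV - {Some w, None} \<subseteq> ?HV - {Some w, None}" by blast
    show "card (?HV - {Some w, None}) = card (?HV - {Some w, None})" ..
    show "\<not> (\<exists>xs. is_path (?HV - (?HV - {Some w, None})) ?HE xs \<and> hd xs = Some w \<and> last xs = None)"
    proof
      assume "\<exists>xs. is_path (?HV - (?HV - {Some w, None})) ?HE xs \<and> hd xs = Some w \<and> last xs = None"
      then obtain xs where xs: "is_path (?HV - (?HV - {Some w, None})) ?HE xs" "hd xs = Some w"
        "last xs = None" by blast
      obtain r where xr: "xs = Some w # r" using xs(1,2) is_path_nonempty by (cases xs) auto
      have rne: "r \<noteq> []" using xr xs(3) by auto
      have r1: "?HE (Some w) (hd r)" "Some w \<notin> set r" "set r \<subseteq> {Some w, None}"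
        using xs(1) xr rne is_path_set[OF xs(1)] by (auto simp: is_path_Cons)
      have "hd r \<in> {Some w, None}" using r1(3) hd_in_set[OF rne] by blast
      then have "hd r = None" using r1(2) hd_in_set[OF rne] by auto
      then show False using r1(1) nadj by simp
    qed
  qed
  have "Q (LEAST n. Q n)" using ex by (rule LeastI)
  then obtain C' where C': "C' \<subseteq> ?HV - {Some w, None}" "card C' = cut_size ?HV ?HE (Some w) None"
    "\<not> (\<exists>xs. is_path (?HV - C') ?HE xs \<and> hd xs = Some w \<and> last xs = None)"
    unfolding Q_def cs by blast
  define C where "C = {x. Some x \<in> C'}"
  have CC: "C' = Some ` C"
  proof
    show "C' \<subseteq> Some ` C"
    proof
      fix y assume y: "y \<in> C'"
      obtain x where "y = Some x" using C'(1) y by - (cases y, auto)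
      then show "y \<in> Some ` C" using y unfolding C_def by blast
    qed
    show "Some ` C \<subseteq> C'" unfolding C_def by blast
  qed
  have Csub: "C \<subseteq> V - M - {w}" using C'(1) unfolding CC aux_V_def by auto
  have "card C = card C'" unfolding CC by (simp add: card_image)
  then have cC: "card C \<le> r" using C'(2) c by simp
  have "\<not> (\<exists>p. is_path (V - M - C) E p \<and> hd p = w \<and> last p \<in> A)"
  proof
    assume "\<exists>p. is_path (V - M - C) E p \<and> hd p = w \<and> last p \<in> A"
    then obtain p where p: "is_path (V - M - C) E p" "hd p = w" "last p \<in> A" by blast
    have "is_path (?HV - C') ?HE (map Some p @ [None])"
      using to_H[OF p(1,3)] unfolding CC .
    moreover have "hd (map Some p @ [None]) = Some w"
      using p(2) to_H_hd is_path_nonempty[OF p(1)] by metis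
    moreover have "last (map Some p @ [None]) = None" by simp
    ultimately show False using C'(3) by blast
  qed
  then show ?thesis using Csub cC by blast
qed

lemma Gamma_ge:
  assumes "finite S" "S \<noteq> {}"
  shows "r \<le> Gamma HV HE (Some ` S) t \<longleftrightarrow> (\<forall>w\<in>S. r \<le> cut_size HV HE (Some w) t)"
  unfolding Gamma_def using assms by (simp add: image_image)



lemma sgraph_sym: "sgraph V E \<Longrightarrow> E a b \<Longrightarrow> E b a"
  unfolding sgraph_def by blast

lemma sgraph_in: "sgraph V E \<Longrightarrow> E a b \<Longrightarrow> a \<in> V \<and> b \<in> V"
  unfolding sgraph_def by blast

lemma sgraph_fin: "sgraph V E \<Longrightarrow> finite V"
  unfolding sgraph_def by blast

lemma two_sides:
  assumes sym: "\<And>a b. E a b \<Longrightarrow> E b a" and p: "is_path V E p" "hd p \<in> M" "last p \<in> M"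
    and w: "w \<in> set p" "w \<notin> M"
  shows "\<exists>as1 m1 as2 m2. is_path (V - M) E (w # as1) \<and> is_path (V - M) E (w # as2) \<and>
     m1 \<in> M \<and> m2 \<in> M \<and> m1 \<noteq> m2 \<and> E (last (w # as1)) m1 \<and> E (last (w # as2)) m2 \<and>
     set as1 \<inter> set as2 = {} \<and> set as1 \<subseteq> set p \<and> set as2 \<subseteq> set p"
proof -
  obtain xs ys where ps: "p = xs @ w # ys" using w(1) by (meson split_list)
  have xne: "xs \<noteq> []" using ps p(2) w(2) by (cases xs) auto
  have yne: "ys \<noteq> []" using ps p(3) w(2) by auto
  have pp: "is_path V E (xs @ w # ys)" using p(1) ps by simp
  have dis: "set xs \<inter> set (w # ys) = {}" and wys: "is_path V E (w # ys)"
    using pp unfolding is_path_append[OF xne list.simps(3)] by auto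
  have pp2: "is_path V E ((xs @ [w]) @ ys)" using pp by simp
  have xwne: "xs @ [w] \<noteq> []" by simp
  have xw: "is_path V E (xs @ [w])" using is_path_append[OF xwne yne, of V E] pp2 by blast
  have wxs: "is_path V E (w # rev xs)" using is_path_rev[OF sym xw] by simp
  have "last ys = last p" using ps yne by simp
  then have "\<exists>x\<in>set ys. x \<in> M" using p(3) last_in_set[OF yne] by metis
  then obtain a2 m2 b2 where ys: "ys = a2 @ m2 # b2" "m2 \<in> M" "\<forall>y\<in>set a2. y \<notin> M"
    by (rule split_list_first_propE)
  have r1: "is_path V E ((w # a2) @ m2 # b2)" using wys ys(1) by simp
  have r2: "is_path V E (w # a2)" "E (last (w # a2)) m2"
    using r1 unfolding is_path_append[of "w # a2" "m2 # b2", OF list.simps(3) list.simps(3)] by auto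
  have r3: "is_path (V - M) E (w # a2)"
    using r2(1) is_path_set[OF r2(1)] ys(3) w(2) by (intro is_path_mono[OF r2(1)]) auto
  have "last (rev xs) \<in> M" using p(2) ps xne by (simp add: last_rev)
  moreover have "last (rev xs) \<in> set (rev xs)" using xne by (intro last_in_set) simp
  ultimately have "\<exists>x\<in>set (rev xs). x \<in> M" by blast
  then obtain a1 m1 b1 where xs: "rev xs = a1 @ m1 # b1" "m1 \<in> M" "\<forall>y\<in>set a1. y \<notin> M"
    by (rule split_list_first_propE)
  have l1: "is_path V E ((w # a1) @ m1 # b1)" using wxs xs(1) by simp
  have l2: "is_path V E (w # a1)" "E (last (w # a1)) m1"
    using l1 unfolding is_path_append[of "w # a1" "m1 # b1", OF list.simps(3) list.simps(3)] by auto
  have l3: "is_path (V - M) E (w # a1)"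
    using l2(1) is_path_set[OF l2(1)] xs(3) w(2) by (intro is_path_mono[OF l2(1)]) auto
  have "set xs = set a1 \<union> insert m1 (set b1)" using arg_cong[OF xs(1), of set] by simp
  then have sa1: "set a1 \<subseteq> set xs" "m1 \<in> set xs" by auto
  have sa2: "set a2 \<subseteq> set ys" "m2 \<in> set ys" using ys(1) by auto
  have "m1 \<noteq> m2" using sa1(2) sa2(2) dis by auto
  moreover have "set a1 \<inter> set a2 = {}" using sa1(1) sa2(1) dis by auto
  moreover have "set a1 \<subseteq> set p" "set a2 \<subseteq> set p" using sa1(1) sa2(1) ps by auto
  ultimately show ?thesis using l3 r3 l2(2) r2(2) xs(2) ys(2) by blast
qed

lemma ext_mon:
  assumes G: "sgraph V E" and M': "M' \<subseteq> M"
    and q: "is_path (V - M - X) E q" "last q \<in> mon_nbrs V E M M'"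
  shows "\<exists>m\<in>M'. is_path (V - X - {m}) E q \<and> is_path (V - (X - M)) E (q @ [m]) \<and> last (q @ [m]) = m"
proof -
  obtain m where m: "m \<in> M'" "E m (last q)" using q(2) unfolding mon_nbrs_def by blast
  have mV: "m \<in> V" using sgraph_in[OF G m(2)] by blast
  have mM: "m \<in> M" using m(1) M' by blast
  have qne: "q \<noteq> []" using q(1) is_path_nonempty by blast
  have mq: "m \<notin> set q" using is_path_set[OF q(1)] mM by blast
  have q2: "is_path (V - (X - M)) E q" using is_path_set[OF q(1)] by (intro is_path_mono[OF q(1)]) blast
  have "is_path (V - (X - M)) E (q @ [m])"
    unfolding is_path_append[OF qne list.simps(3)]
    using q2 mV mM mq sgraph_sym[OF G m(2)] by simp
  moreover have "is_path (V - X - {m}) E q"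
    using q(1) is_path_set[OF q(1)] mM by (intro is_path_mono[OF q(1)]) auto
  ultimately show ?thesis using m(1) by auto
qed


lemma csp_from_fan:
  assumes f: "fan2 W E w M" and wM: "w \<notin> M" and sym: "\<And>a b. E a b \<Longrightarrow> E b a"
  shows "\<exists>r. is_path W E r \<and> hd r \<in> M \<and> last r \<in> M \<and> hd r \<noteq> last r \<and> w \<in> set r"
proof -
  obtain p q where pq: "is_path W E p" "is_path W E q" "hd p = w" "hd q = w"
     "last p \<in> M" "last q \<in> M" "last p \<noteq> last q" "set p \<inter> set q = {w}"
    using f unfolding fan2_def by blast
  obtain q' where qs: "q = w # q'" using pq(2,4) is_path_nonempty by (cases q) auto
  have q'ne: "q' \<noteq> []" using qs pq(6) wM by auto
  have q1: "is_path W E q'" "E w (hd q')" "w \<notin> set q'" using pq(2) qs q'ne by (auto simp: is_path_Cons)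
  have pne: "p \<noteq> []" using pq(1) is_path_nonempty by blast
  have rp: "is_path W E (rev p)" using is_path_rev[OF sym pq(1)] .
  have rne: "rev p \<noteq> []" using pne by simp
  have lr: "last (rev p) = w" using pq(3) pne by (simp add: last_rev)
  have dj: "set (rev p) \<inter> set q' = {}" using pq(8) qs q1(3) by auto
  have R: "is_path W E (rev p @ q')"
    unfolding is_path_append[OF rne q'ne] using rp q1 dj lr by simp
  have "hd (rev p @ q') = last p" using pne by (simp add: hd_rev)
  moreover have "last (rev p @ q') = last q" using qs q'ne by simp
  moreover have "w \<in> set (rev p @ q')" using pq(3) pne by auto
  ultimately show ?thesis using R pq(5,6,7) by metis
qed

lemma part_a_path:
  assumes G: "sgraph V E" and w: "w \<in> V - M" and F: "F \<subseteq> V - M" "w \<notin> F" "card F \<le> k"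
   and g1: "k + 2 \<le> cut_size (aux_V V M) (aux_E V E M (mon_nbrs V E M M)) (Some w) None"
   and g2: "\<forall>m\<in>M. k + 1 \<le> cut_size (aux_V V M) (aux_E V E M (mon_nbrs V E M (M - {m}))) (Some w) None"
  shows "\<exists>p \<in> CSP_paths V E M. w \<in> set p \<and> set p \<inter> F = {}"
proof -
  have fin: "finite V" by (rule sgraph_fin[OF G])
  have finF: "finite F" using F(1) fin by (meson Diff_subset finite_subset subset_trans)
  have sym: "\<And>a b. E a b \<Longrightarrow> E b a" by (rule sgraph_sym[OF G])
  have FM: "F - M = F" using F(1) by blast
  have h0: "\<exists>p. is_path (V - F) E p \<and> hd p = w \<and> last p \<in> M"
  proof -
    have "card F < cut_size (aux_V V M) (aux_E V E M (mon_nbrs V E M M)) (Some w) None"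
      using g1 F(3) by simp
    from cut_large[OF w F(1,2) this] obtain q where
      q: "is_path (V - M - F) E q" "hd q = w" "last q \<in> mon_nbrs V E M M" by blast
    from ext_mon[OF G subset_refl q(1,3)] obtain m where
      m: "m \<in> M" "is_path (V - (F - M)) E (q @ [m])" "last (q @ [m]) = m" by blast
    have "hd (q @ [m]) = w" using q(2) is_path_nonempty[OF q(1)] by simp
    then show ?thesis using m FM by (intro exI[of _ "q @ [m]"]) simp
  qed
  have h1: "\<exists>p. is_path (V - F - {x}) E p \<and> hd p = w \<and> last p \<in> M - {x}"
    if x: "x \<in> V - F" "x \<noteq> w" for x
  proof (cases "x \<in> M")
    case True
    have "card F < cut_size (aux_V V M) (aux_E V E M (mon_nbrs V E M (M - {x}))) (Some w) None"
      using g2 True F(3) by fastforce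
    from cut_large[OF w F(1,2) this] obtain q where
      q: "is_path (V - M - F) E q" "hd q = w" "last q \<in> mon_nbrs V E M (M - {x})" by blast
    from ext_mon[OF G _ q(1,3)] obtain m where
      m: "m \<in> M - {x}" "is_path (V - (F - M)) E (q @ [m])" "last (q @ [m]) = m" by blast
    have "set (q @ [m]) \<subseteq> V - F - {x}"
      using is_path_set[OF q(1)] is_path_set[OF m(2)] m(1) True F(1) by auto
    then have P: "is_path (V - F - {x}) E (q @ [m])" using is_path_mono[OF m(2)] by blast
    have "hd (q @ [m]) = w" using q(2) is_path_nonempty[OF q(1)] by simp
    then show ?thesis using P m by (intro exI[of _ "q @ [m]"]) simp
  next
    case False
    let ?X = "insert x F"
    have X: "?X \<subseteq> V - M" "w \<notin> ?X" using x F False by auto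
    have "card ?X \<le> Suc (card F)" using finF by (simp add: card_insert_if)
    then have "card ?X \<le> k + 1" using F(3) by simp
    then have "card ?X < cut_size (aux_V V M) (aux_E V E M (mon_nbrs V E M M)) (Some w) None"
      using g1 by simp
    from cut_large[OF w X this] obtain q where
      q: "is_path (V - M - ?X) E q" "hd q = w" "last q \<in> mon_nbrs V E M M" by blast
    from ext_mon[OF G subset_refl q(1,3)] obtain m where
      m: "m \<in> M" "is_path (V - (?X - M)) E (q @ [m])" "last (q @ [m]) = m" by blast
    have "V - (?X - M) = V - F - {x}" using X(1) by blast
    moreover have "hd (q @ [m]) = w" using q(2) is_path_nonempty[OF q(1)] by simp
    moreover have "m \<in> M - {x}" using m(1) False by blast
    ultimately show ?thesis using m by (intro exI[of _ "q @ [m]"]) simp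
  qed
  have "fan2 (V - F) E w M"
  proof (rule fan)
    show "finite (V - F)" using fin by blast
    show "\<And>a b. E a b \<Longrightarrow> E b a" by (rule sym)
    show "w \<notin> M" using w by blast
    show "\<exists>p. is_path (V - F) E p \<and> hd p = w \<and> last p \<in> M" by (rule h0)
    show "\<exists>p. is_path (V - F - {x}) E p \<and> hd p = w \<and> last p \<in> M - {x}"
      if "x \<in> V - F" "x \<noteq> w" for x using h1[OF that] .
  qed
  from csp_from_fan[OF this _ sym] w obtain r where
    r: "is_path (V - F) E r" "hd r \<in> M" "last r \<in> M" "hd r \<noteq> last r" "w \<in> set r" by blast
  have "is_path V E r" using is_path_set[OF r(1)] by (intro is_path_mono[OF r(1)]) blast
  then have "r \<in> CSP_paths V E M" using r unfolding CSP_paths_def by blast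
  moreover have "set r \<inter> F = {}" using is_path_set[OF r(1)] by blast
  ultimately show ?thesis using r(5) by blast
qed


lemma hit:
  assumes sym: "\<And>a b. E a b \<Longrightarrow> E b a"
    and p: "is_path (V - M) E (w # as)" "E (last (w # as)) mi" "mi \<in> M'" "w \<notin> C"
    and np: "\<not> (\<exists>p. is_path (V - M - C) E p \<and> hd p = w \<and> last p \<in> mon_nbrs V E M M')"
  shows "\<exists>c \<in> set as. c \<in> C"
proof (rule ccontr)
  assume "\<not> (\<exists>c \<in> set as. c \<in> C)"
  then have "set (w # as) \<subseteq> V - M - C" using is_path_set[OF p(1)] p(4) by auto
  then have P: "is_path (V - M - C) E (w # as)" by (rule is_path_mono[OF p(1)])
  have "last (w # as) \<in> set (w # as)" by (rule last_in_set) simp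
  then have "last (w # as) \<in> V - M" using is_path_set[OF p(1)] by blast
  moreover have "E mi (last (w # as))" using sym p(2) by blast
  ultimately have "last (w # as) \<in> mon_nbrs V E M M'" using p(3) unfolding mon_nbrs_def by blast
  then show False using np P by fastforce
qed

lemma csp_facts: "p \<in> CSP_paths V E M \<Longrightarrow> is_path V E p \<and> hd p \<in> M \<and> last p \<in> M"
  unfolding CSP_paths_def by blast

lemma part_b1:
  assumes G: "sgraph V E" and kid: "k_identifiable V E M k S" and w: "w \<in> S" and S: "S \<subseteq> V - M"
    and kc: "k + 1 \<le> card (V - M)" and k1: "1 \<le> k"
  shows "k + 1 \<le> cut_size (aux_V V M) (aux_E V E M (mon_nbrs V E M M)) (Some w) None"
proof (rule ccontr)
  assume "\<not> ?thesis"
  then have ck: "cut_size (aux_V V M) (aux_E V E M (mon_nbrs V E M M)) (Some w) None \<le> k" by simp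
  have fin: "finite V" by (rule sgraph_fin[OF G])
  have sym: "\<And>a b. E a b \<Longrightarrow> E b a" by (rule sgraph_sym[OF G])
  have wN: "w \<in> V - M" using w S by blast
  show False
  proof (cases "w \<in> mon_nbrs V E M M")
    case True
    then show False using cut_adj[OF fin True, of M E] ck kc by simp
  next
    case False
    from cut_small[OF wN False ck] obtain C where C: "C \<subseteq> V - M - {w}" "card C \<le> k"
      "\<not> (\<exists>p. is_path (V - M - C) E p \<and> hd p = w \<and> last p \<in> mon_nbrs V E M M)" by blast
    have finC: "finite C" using C(1) fin by (meson Diff_subset finite_subset subset_trans)
    define c where "c = (SOME c. c \<in> C)"
    define F1 where "F1 = insert w (C - {c})"
    define F2 where "F2 = C - {c}"
    have cF2: "card F2 \<le> k" unfolding F2_def using card_Diff1_le[of C c] C(2) by linarith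
    have cF1: "card F1 \<le> k"
    proof (cases "C = {}")
      case True
      then show ?thesis unfolding F1_def using k1 by simp
    next
      case False
      then have "c \<in> C" unfolding c_def by (simp add: some_in_eq)
      then have "card (C - {c}) = card C - 1" using finC by simp
      moreover have "card C \<ge> 1" using False finC by (simp add: Suc_leI card_gt_0_iff)
      moreover have "card F1 \<le> Suc (card (C - {c}))" unfolding F1_def using finC by (simp add: card_insert_if)
      ultimately show ?thesis using C(2) by linarith
    qed
    have sub: "F1 \<subseteq> V - M" "F2 \<subseteq> V - M" unfolding F1_def F2_def using C(1) wN by auto
    have wC: "w \<notin> C" using C(1) by blast
    have neq: "F1 \<inter> S \<noteq> F2 \<inter> S" unfolding F1_def F2_def using w wC by blast
    have "fail_paths (CSP_paths V E M) F1 \<noteq> fail_paths (CSP_paths V E M) F2"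
      using kid sub cF1 cF2 neq unfolding k_identifiable_def by blast
    moreover have "fail_paths (CSP_paths V E M) F1 = fail_paths (CSP_paths V E M) F2"
      unfolding fail_paths_def
    proof (intro Collect_cong conj_cong refl)
      fix p assume pP: "p \<in> CSP_paths V E M"
      show "(set p \<inter> F1 \<noteq> {}) = (set p \<inter> F2 \<noteq> {})"
      proof
        assume "set p \<inter> F2 \<noteq> {}" then show "set p \<inter> F1 \<noteq> {}" unfolding F1_def F2_def by blast
      next
        assume h: "set p \<inter> F1 \<noteq> {}"
        show "set p \<inter> F2 \<noteq> {}"
        proof (cases "w \<in> set p")
          case False
          then show ?thesis using h unfolding F1_def F2_def by blast
        next
          case True
          have pf: "is_path V E p" "hd p \<in> M" "last p \<in> M" using csp_facts[OF pP] by auto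
          have wM: "w \<notin> M" using wN by blast
          from two_sides[OF sym pf True wM] obtain as1 m1 as2 m2 where ts:
            "is_path (V - M) E (w # as1)" "is_path (V - M) E (w # as2)"
            "m1 \<in> M" "m2 \<in> M" "m1 \<noteq> m2" "E (last (w # as1)) m1" "E (last (w # as2)) m2"
            "set as1 \<inter> set as2 = {}" "set as1 \<subseteq> set p" "set as2 \<subseteq> set p" by blast
          obtain c1 where c1: "c1 \<in> set as1" "c1 \<in> C"
            using hit[OF sym ts(1) ts(6) ts(3) wC C(3)] by blast
          obtain c2 where c2: "c2 \<in> set as2" "c2 \<in> C"
            using hit[OF sym ts(2) ts(7) ts(4) wC C(3)] by blast
          have "c1 \<noteq> c2" using c1 c2 ts(8) by blast
          then have "c1 \<in> F2 \<or> c2 \<in> F2" unfolding F2_def using c1 c2 by blast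
          then show ?thesis using c1 c2 ts(9,10) by blast
        qed
      qed
    qed
    ultimately show False by blast
  qed
qed

lemma part_b2:
  assumes G: "sgraph V E" and kid: "k_identifiable V E M k S" and w: "w \<in> S" and S: "S \<subseteq> V - M"
    and kc: "k + 1 \<le> card (V - M)" and k1: "1 \<le> k" and m: "m \<in> M"
  shows "k \<le> cut_size (aux_V V M) (aux_E V E M (mon_nbrs V E M (M - {m}))) (Some w) None"
proof (rule ccontr)
  assume "\<not> ?thesis"
  then have ck: "cut_size (aux_V V M) (aux_E V E M (mon_nbrs V E M (M - {m}))) (Some w) None \<le> k - 1"
    by simp
  have fin: "finite V" by (rule sgraph_fin[OF G])
  have sym: "\<And>a b. E a b \<Longrightarrow> E b a" by (rule sgraph_sym[OF G])
  have wN: "w \<in> V - M" using w S by blast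
  show False
  proof (cases "w \<in> mon_nbrs V E M (M - {m})")
    case True
    then show False using cut_adj[OF fin True, of M E] ck kc by simp
  next
    case False
    from cut_small[OF wN False ck] obtain C where C: "C \<subseteq> V - M - {w}" "card C \<le> k - 1"
      "\<not> (\<exists>p. is_path (V - M - C) E p \<and> hd p = w \<and> last p \<in> mon_nbrs V E M (M - {m}))" by blast
    have finC: "finite C" using C(1) fin by (meson Diff_subset finite_subset subset_trans)
    define F1 where "F1 = insert w C"
    define F2 where "F2 = C"
    have cF2: "card F2 \<le> k" unfolding F2_def using C(2) by linarith
    have "card F1 \<le> Suc (card C)" unfolding F1_def using finC by (simp add: card_insert_if)
    then have cF1: "card F1 \<le> k" using C(2) k1 by linarith
    have sub: "F1 \<subseteq> V - M" "F2 \<subseteq> V - M" unfolding F1_def F2_def using C(1) wN by auto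
    have wC: "w \<notin> C" using C(1) by blast
    have neq: "F1 \<inter> S \<noteq> F2 \<inter> S" unfolding F1_def F2_def using w wC by blast
    have "fail_paths (CSP_paths V E M) F1 \<noteq> fail_paths (CSP_paths V E M) F2"
      using kid sub cF1 cF2 neq unfolding k_identifiable_def by blast
    moreover have "fail_paths (CSP_paths V E M) F1 = fail_paths (CSP_paths V E M) F2"
      unfolding fail_paths_def
    proof (intro Collect_cong conj_cong refl)
      fix p assume pP: "p \<in> CSP_paths V E M"
      show "(set p \<inter> F1 \<noteq> {}) = (set p \<inter> F2 \<noteq> {})"
      proof
        assume "set p \<inter> F2 \<noteq> {}" then show "set p \<inter> F1 \<noteq> {}" unfolding F1_def F2_def by blast
      next
        assume h: "set p \<inter> F1 \<noteq> {}"
        show "set p \<inter> F2 \<noteq> {}"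
        proof (cases "w \<in> set p")
          case False
          then show ?thesis using h unfolding F1_def F2_def by blast
        next
          case True
          have pf: "is_path V E p" "hd p \<in> M" "last p \<in> M" using csp_facts[OF pP] by auto
          have wM: "w \<notin> M" using wN by blast
          from two_sides[OF sym pf True wM] obtain as1 m1 as2 m2 where ts:
            "is_path (V - M) E (w # as1)" "is_path (V - M) E (w # as2)"
            "m1 \<in> M" "m2 \<in> M" "m1 \<noteq> m2" "E (last (w # as1)) m1" "E (last (w # as2)) m2"
            "set as1 \<inter> set as2 = {}" "set as1 \<subseteq> set p" "set as2 \<subseteq> set p" by blast
          show ?thesis
          proof (cases "m1 = m")
            case False
            then have "m1 \<in> M - {m}" using ts(3) by blast
            from hit[OF sym ts(1) ts(6) this wC C(3)] obtain c1 where "c1 \<in> set as1" "c1 \<in> C" by blast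
            then show ?thesis using ts(9) unfolding F2_def by blast
          next
            case True
            then have "m2 \<in> M - {m}" using ts(4,5) by blast
            from hit[OF sym ts(2) ts(7) this wC C(3)] obtain c2 where "c2 \<in> set as2" "c2 \<in> C" by blast
            then show ?thesis using ts(10) unfolding F2_def by blast
          qed
        qed
      qed
    qed
    ultimately show False by blast
  qed
qed


theorem theorem2:
  fixes V :: "'a set" and E :: "'a \<Rightarrow> 'a \<Rightarrow> bool" and M S :: "'a set" and k :: nat
  assumes "sgraph V E" and "connected_graph V E"
    and "M \<subseteq> V" and "S \<subseteq> V - M" and "S \<noteq> {}" and "k \<ge> 1"
  shows
    "(k + 2 \<le> card (V - M) \<and>
      Gamma (aux_V V M) (aux_E V E M (mon_nbrs V E M M)) (Some ` S) None \<ge> k + 2 \<and>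
      (\<forall>m\<in>M. Gamma (aux_V V M) (aux_E V E M (mon_nbrs V E M (M - {m}))) (Some ` S) None \<ge> k + 1)
      \<longrightarrow> k_identifiable V E M k S)
   \<and>
    (k + 1 \<le> card (V - M) \<and> k_identifiable V E M k S
      \<longrightarrow> Gamma (aux_V V M) (aux_E V E M (mon_nbrs V E M M)) (Some ` S) None \<ge> k + 1 \<and>
          (\<forall>m\<in>M. Gamma (aux_V V M) (aux_E V E M (mon_nbrs V E M (M - {m}))) (Some ` S) None \<ge> k))"
proof -
  note G = assms(1)
  have fin: "finite V" by (rule sgraph_fin[OF G])
  have finS: "finite S" using assms(4) fin by (meson Diff_subset finite_subset subset_trans)
  note Gg = Gamma_ge[OF finS assms(5)]
  show ?thesis
  proof (intro conjI impI)
    assume h: "k + 2 \<le> card (V - M) \<and>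
      Gamma (aux_V V M) (aux_E V E M (mon_nbrs V E M M)) (Some ` S) None \<ge> k + 2 \<and>
      (\<forall>m\<in>M. Gamma (aux_V V M) (aux_E V E M (mon_nbrs V E M (M - {m}))) (Some ` S) None \<ge> k + 1)"
    have g1: "\<forall>w\<in>S. k + 2 \<le> cut_size (aux_V V M) (aux_E V E M (mon_nbrs V E M M)) (Some w) None"
      using h Gg by blast
    have g2: "\<forall>w\<in>S. \<forall>m\<in>M. k + 1 \<le> cut_size (aux_V V M) (aux_E V E M (mon_nbrs V E M (M - {m}))) (Some w) None"
      using h Gg by blast
    have key: "\<exists>p \<in> CSP_paths V E M. w \<in> set p \<and> set p \<inter> F = {}"
      if "w \<in> S" "F \<subseteq> V - M" "w \<notin> F" "card F \<le> k" for w F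
    proof -
      have "w \<in> V - M" using that(1) assms(4) by blast
      then show ?thesis using part_a_path[OF G _ that(2,3,4)] g1 g2 that(1) by blast
    qed
    show "k_identifiable V E M k S"
      unfolding k_identifiable_def
    proof (intro allI impI)
      fix F1 F2
      assume a: "F1 \<subseteq> V - M \<and> F2 \<subseteq> V - M \<and> card F1 \<le> k \<and> card F2 \<le> k \<and> F1 \<inter> S \<noteq> F2 \<inter> S"
      then obtain w where w: "w \<in> S" "(w \<in> F1 \<and> w \<notin> F2) \<or> (w \<in> F2 \<and> w \<notin> F1)" by blast
      show "fail_paths (CSP_paths V E M) F1 \<noteq> fail_paths (CSP_paths V E M) F2"
      proof (cases "w \<in> F1 \<and> w \<notin> F2")
        case True
        from key[OF w(1), of F2] a True obtain p where
          p: "p \<in> CSP_paths V E M" "w \<in> set p" "set p \<inter> F2 = {}" by blast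
        have "p \<in> fail_paths (CSP_paths V E M) F1" using p True unfolding fail_paths_def by blast
        moreover have "p \<notin> fail_paths (CSP_paths V E M) F2" using p unfolding fail_paths_def by blast
        ultimately show ?thesis by blast
      next
        case False
        then have ww: "w \<in> F2" "w \<notin> F1" using w(2) by blast+
        from key[OF w(1), of F1] a ww obtain p where
          p: "p \<in> CSP_paths V E M" "w \<in> set p" "set p \<inter> F1 = {}" by blast
        have "p \<in> fail_paths (CSP_paths V E M) F2" using p ww unfolding fail_paths_def by blast
        moreover have "p \<notin> fail_paths (CSP_paths V E M) F1" using p unfolding fail_paths_def by blast
        ultimately show ?thesis by blast
      qed
    qed
  next
    assume h: "k + 1 \<le> card (V - M) \<and> k_identifiable V E M k S"
    have "\<forall>w\<in>S. k + 1 \<le> cut_size (aux_V V M) (aux_E V E M (mon_nbrs V E M M)) (Some w) None"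
      using part_b1[OF G _ _ assms(4) _ assms(6)] h by blast
    then show "Gamma (aux_V V M) (aux_E V E M (mon_nbrs V E M M)) (Some ` S) None \<ge> k + 1"
      using Gg by blast
  next
    assume h: "k + 1 \<le> card (V - M) \<and> k_identifiable V E M k S"
    show "\<forall>m\<in>M. Gamma (aux_V V M) (aux_E V E M (mon_nbrs V E M (M - {m}))) (Some ` S) None \<ge> k"
    proof
      fix m assume m: "m \<in> M"
      have "\<forall>w\<in>S. k \<le> cut_size (aux_V V M) (aux_E V E M (mon_nbrs V E M (M - {m}))) (Some w) None"
        using part_b2[OF G _ _ assms(4) _ assms(6) m] h by blast
      then show "Gamma (aux_V V M) (aux_E V E M (mon_nbrs V E M (M - {m}))) (Some ` S) None \<ge> k"
        using Gg by blast
    qed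
  qed
qed

end
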